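(* If $s_1,s_2\in\mathcal F(M,g^M,E,h^E)$ and $t_1,t_2>0$ are real numbers, then $t_1s_1+t_2s_2\in\mathcal F(M,g^M,E,h^E)$. In particular $\mathcal F(M,g^M,E,h^E)$ is a convex cone.
   Context: $G$ is a compact Lie group with Lie algebra $\mathfrak g$; a $G$-invariant inner product on $\mathfrak g^*$ is fixed, inducing an isomorphism $\psi:\mathfrak g^*\to\mathfrak g$ and norms $|\cdot|$. For $u\in\mathfrak g$ let $u_M(x)=\frac{d}{dt}|_{t=0}\exp(tu)\cdot x$. $(M,g^M)$ is a complete complex manifold without boundary of complex dimension $n$, with complex structure $J$ orthogonal for $g^M$, on which $G$ acts holomorphically and isometrically. It is a tamed asymptotically Kähler $G$-manifold: there is a $G$-invariant compact $K\subset M$ such that $g^M$ is Kähler on $M\setminus K$ with Kähler form $\omega$, the action on $M\setminus K$ is Hamiltonian with moment map $\mu:M\setminus K\to\mathfrak g^*$ (i.e. $d\langle\mu,u\rangle=\iota_{u_M}\omega$), $\mu$ is proper, and the vector field $-J\nabla(|\mu|^2/2)$ vanishes nowhere outside some compact set. Fix a smooth $G$-equivariant extension $\tilde\mu:M\to\mathfrak g^*$ of $\mu$ and set $\mathbf v(x)=\psi(\tilde\mu(x))$, $v=-J\nabla(|\tilde\mu|^2/2)$. $E$ is a $G$-equivariant holomorphic vector bundle over $M$ with a $G$-invariant Hermitian metric $h^E$ and $G$-invariant holomorphic Hermitian connection $\nabla^E$. Let $\mathcal E=E\otimes\Lambda^\bullet(T^{0,1}M)^*$ with connection $\nabla^{\mathcal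 E}=\nabla^E\otimes1+1\otimes\nabla^{LC}$. For $u\in\mathfrak g$ let $\mu^{\mathcal E}(u)=\nabla^{\mathcal E}_{u_M}-\mathcal L^{\mathcal E}_u\in\mathrm{End}(\mathcal E)$, $\mathcal L^{\mathcal E}_u$ the infinitesimal action. Set $\nu=|\mathbf v|+\|\nabla^{LC}v\|+\|\mu^{\mathcal E}(\mathbf v)\|+|v|+1$. A smooth $s:[0,\infty)\to[0,\infty)$ is admissible for $(M,g^M,E,h^E)$ if $s'>0$ and $f(x):=s'(|\tilde\mu(x)|^2/2)$ satisfies $\lim_{x\to\infty}\frac{f^2|v|^2}{|df|\,|v|+f\nu+1}=\infty$ ($x$ leaving every compact set). $\mathcal F(M,g^M,E,h^E)$ is the set of admissible functions. *)

theory Defs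
  imports "HOL-Analysis.Analysis"
begin

definition cocompact :: "'a::topological_space filter" where
  "cocompact = (INF K\<in>{K. compact K}. principal (- K))"

fun hderiv :: "nat \<Rightarrow> (real \<Rightarrow> real) \<Rightarrow> real \<Rightarrow> real" where
  "hderiv 0 s = s"
| "hderiv (Suc k) s = (\<lambda>x. vector_derivative (hderiv k s) (at x within {0..}))"

definition smooth_halfline :: "(real \<Rightarrow> real) \<Rightarrow> bool" where
  "smooth_halfline s \<longleftrightarrow> (\<forall>x\<ge>0. s x \<ge> 0) \<and>
     (\<forall>k. \<forall>x\<ge>0. (hderiv k s has_vector_derivative hderiv (Suc k) s x) (at x within {0..}))"

text \<open>The geometric data enter only through:
  mu :: M \<Rightarrow> 'g  (the extension \<mu>~ of the moment map, valued in \<gg>^* with the invariant inner product),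
  dphi x = |d(|\<mu>~|^2/2)|(x),  vnorm x = |v(x)|,  nu x = \<nu>(x).
  With \<phi> = |\<mu>~|^2/2 and f = s' \<circ> \<phi>, the chain rule gives |df| = |s''(\<phi>)| |d\<phi>|.\<close>
definition admissible ::
  "('m::topological_space \<Rightarrow> 'g::real_normed_vector) \<Rightarrow> ('m \<Rightarrow> real) \<Rightarrow> ('m \<Rightarrow> real)
     \<Rightarrow> ('m \<Rightarrow> real) \<Rightarrow> (real \<Rightarrow> real) \<Rightarrow> bool" where
  "admissible mu dphi vnorm nu s \<longleftrightarrow>
     smooth_halfline s \<and> (\<forall>x\<ge>0. hderiv 1 s x > 0) \<and>
     (let f = (\<lambda>x. hderiv 1 s (norm (mu x) ^ 2 / 2));
          df = (\<lambda>x. \<bar>hderiv 2 s (norm (mu x) ^ 2 / 2)\<bar> * dphi x)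
      in filterlim (\<lambda>x. (f x)^2 * (vnorm x)^2 / (df x * vnorm x + f x * nu x + 1))
           at_top cocompact)"

end

theory Submission
  imports Defs
begin

lemma arith_key:
  fixes t1 t2 f1 f2 a1 a2 g V nu K :: real
  assumes t: "t1 > 0" "t2 > 0" and f: "f1 > 0" "f2 > 0" and g: "g \<ge> 0" and V: "V \<ge> 0"
    and nu: "nu \<ge> 1" and K: "K \<ge> 0"
    and Q1: "K \<le> f1^2 * V^2 / (\<bar>a1\<bar> * g * V + f1 * nu + 1)"
    and Q2: "K \<le> f2^2 * V^2 / (\<bar>a2\<bar> * g * V + f2 * nu + 1)"
  shows "min (t1^2) (t2^2) * K / (t1 + t2 + 1) \<le>
     (t1*f1 + t2*f2)^2 * V^2 / (\<bar>t1*a1 + t2*a2\<bar> * g * V + (t1*f1+t2*f2) * nu + 1)"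
proof -
  define D1 where "D1 = \<bar>a1\<bar> * g * V + f1 * nu + 1"
  define D2 where "D2 = \<bar>a2\<bar> * g * V + f2 * nu + 1"
  define D where "D = \<bar>t1*a1 + t2*a2\<bar> * g * V + (t1*f1+t2*f2) * nu + 1"
  define m where "m = min (t1^2) (t2^2)"
  define c where "c = t1 + t2 + 1"
  have gV: "g * V \<ge> 0" using g V by simp
  have h1: "\<bar>a1\<bar> * g * V \<ge> 0" "\<bar>a2\<bar> * g * V \<ge> 0" "\<bar>t1*a1 + t2*a2\<bar> * g * V \<ge> 0"
    using gV by (simp_all add: mult.assoc)
  have h2: "f1 * nu \<ge> 0" "f2 * nu \<ge> 0" "(t1*f1+t2*f2) * nu \<ge> 0" using f nu t by simp_all
  have D1p: "D1 \<ge> 1" unfolding D1_def using h1 h2 by linarith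
  have D2p: "D2 \<ge> 1" unfolding D2_def using h1 h2 by linarith
  have Dp: "D \<ge> 1" unfolding D_def using h1 h2 by linarith
  have N1: "K * D1 \<le> f1^2 * V^2" using Q1 D1p unfolding D1_def by (simp add: pos_le_divide_eq)
  have N2: "K * D2 \<le> f2^2 * V^2" using Q2 D2p unfolding D2_def by (simp add: pos_le_divide_eq)
  have mp: "m \<ge> 0" "m \<le> t1^2" "m \<le> t2^2" unfolding m_def by auto
  have "(t1*f1 + t2*f2)^2 * V^2 \<ge> t1^2 * (f1^2 * V^2) + t2^2 * (f2^2 * V^2)"
  proof -
    have "(t1*f1 + t2*f2)^2 = t1^2*f1^2 + t2^2*f2^2 + 2*t1*t2*f1*f2" by (simp add: power2_eq_square algebra_simps)
    moreover have "2*t1*t2*f1*f2 * V^2 \<ge> 0" using t f by simp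
    ultimately show ?thesis by (simp add: algebra_simps)
  qed
  moreover have "t1^2 * (f1^2 * V^2) \<ge> m * (K * D1)"
    using mp N1 K D1p by (intro mult_mono[where a=m and c="K * D1"]) auto
  moreover have "t2^2 * (f2^2 * V^2) \<ge> m * (K * D2)"
    using mp N2 K D2p by (intro mult_mono[where a=m and c="K * D2"]) auto
  ultimately have N: "(t1*f1 + t2*f2)^2 * V^2 \<ge> m * K * (D1 + D2)" by (simp add: algebra_simps)
  have "\<bar>t1*a1 + t2*a2\<bar> \<le> t1 * \<bar>a1\<bar> + t2 * \<bar>a2\<bar>" using t
  proof -
    have "\<bar>t1*a1 + t2*a2\<bar> \<le> \<bar>t1*a1\<bar> + \<bar>t2*a2\<bar>" by (rule abs_triangle_ineq)
    thus ?thesis using t by (simp add: abs_mult)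
  qed
  hence "\<bar>t1*a1 + t2*a2\<bar> * (g * V) \<le> (t1 * \<bar>a1\<bar> + t2 * \<bar>a2\<bar>) * (g*V)"
    using gV by (rule mult_right_mono)
  hence "D \<le> t1 * (\<bar>a1\<bar> * g * V) + t2 * (\<bar>a2\<bar> * g * V) + t1 * (f1 * nu) + t2 * (f2*nu) + 1"
    unfolding D_def by (simp add: algebra_simps)
  also have "\<dots> \<le> t1 * D1 + t2 * D2 + 1" unfolding D1_def D2_def using t by (simp add: algebra_simps)
  also have "\<dots> \<le> c * (D1 + D2)" proof -
    have "D1 * t2 \<ge> 0" "D2 * t1 \<ge> 0" using t D1p D2p by simp_all
    thus ?thesis unfolding c_def using D1p D2p by (simp add: algebra_simps)
  qed
  finally have Dle: "D \<le> c * (D1 + D2)" .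
  have cp: "c > 0" unfolding c_def using t by simp
  have "m * K / c = m * K * (D1 + D2) / (c * (D1 + D2))" using D1p D2p cp by simp
  also have "\<dots> \<le> m * K * (D1 + D2) / D"
    using Dle Dp mp K D1p D2p by (intro divide_left_mono) auto
  also have "\<dots> \<le> (t1*f1 + t2*f2)^2 * V^2 / D"
    using N Dp by (intro divide_right_mono) auto
  finally show ?thesis unfolding m_def c_def D_def .
qed


lemma nonbot_Ici: "x \<ge> (0::real) \<Longrightarrow> at x within {0..} \<noteq> bot"
proof -
  assume x: "x \<ge> 0"
  have "x islimpt {x..x+1}" by simp
  hence "x islimpt {0..}" by (rule islimpt_subset) (use x in auto)
  thus ?thesis using trivial_limit_within by blast
qed

lemma hderiv_lin:
  assumes s1: "smooth_halfline s1" and s2: "smooth_halfline s2"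
  shows "x \<ge> 0 \<Longrightarrow> hderiv k (\<lambda>r. t1 * s1 r + t2 * s2 r) x = t1 * hderiv k s1 x + t2 * hderiv k s2 x"
proof (induction k arbitrary: x)
  case 0
  then show ?case by simp
next
  case (Suc k)
  have d1: "(hderiv k s1 has_vector_derivative hderiv (Suc k) s1 x) (at x within {0..})"
    using s1 Suc.prems unfolding smooth_halfline_def by blast
  have d2: "(hderiv k s2 has_vector_derivative hderiv (Suc k) s2 x) (at x within {0..})"
    using s2 Suc.prems unfolding smooth_halfline_def by blast
  have "((\<lambda>y. t1 * hderiv k s1 y + t2 * hderiv k s2 y) has_vector_derivative
          t1 * hderiv (Suc k) s1 x + t2 * hderiv (Suc k) s2 x) (at x within {0..})"
    using has_vector_derivative_add[OF has_vector_derivative_mult_right[OF d1, of t1]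
        has_vector_derivative_mult_right[OF d2, of t2]] by simp
  hence D: "(hderiv k (\<lambda>r. t1 * s1 r + t2 * s2 r) has_vector_derivative
          t1 * hderiv (Suc k) s1 x + t2 * hderiv (Suc k) s2 x) (at x within {0..})"
    by (rule has_vector_derivative_transform[rotated 2]) (use Suc in auto)
  hence "vector_derivative (hderiv k (\<lambda>r. t1 * s1 r + t2 * s2 r)) (at x within {0..})
     = t1 * hderiv (Suc k) s1 x + t2 * hderiv (Suc k) s2 x"
    using vector_derivative_within[OF nonbot_Ici[OF Suc.prems]] by blast
  thus ?case by simp
qed


lemma smooth_lin:
  assumes s1: "smooth_halfline s1" and s2: "smooth_halfline s2" and t: "t1 > 0" "t2 > 0"
  shows "smooth_halfline (\<lambda>r. t1 * s1 r + t2 * s2 r)"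
  unfolding smooth_halfline_def
proof (intro conjI allI impI)
  fix x :: real assume "x \<ge> 0"
  thus "0 \<le> t1 * s1 x + t2 * s2 x" using s1 s2 t unfolding smooth_halfline_def
    by (simp add: add_nonneg_nonneg)
next
  fix k and x :: real assume x: "x \<ge> 0"
  have d1: "(hderiv k s1 has_vector_derivative hderiv (Suc k) s1 x) (at x within {0..})"
    using s1 x unfolding smooth_halfline_def by blast
  have d2: "(hderiv k s2 has_vector_derivative hderiv (Suc k) s2 x) (at x within {0..})"
    using s2 x unfolding smooth_halfline_def by blast
  have "((\<lambda>y. t1 * hderiv k s1 y + t2 * hderiv k s2 y) has_vector_derivative
          t1 * hderiv (Suc k) s1 x + t2 * hderiv (Suc k) s2 x) (at x within {0..})"
    using has_vector_derivative_add[OF has_vector_derivative_mult_right[OF d1, of t1]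
        has_vector_derivative_mult_right[OF d2, of t2]] by simp
  hence "(hderiv k (\<lambda>r. t1 * s1 r + t2 * s2 r) has_vector_derivative
          t1 * hderiv (Suc k) s1 x + t2 * hderiv (Suc k) s2 x) (at x within {0..})"
    by (rule has_vector_derivative_transform[rotated 2]) (use x hderiv_lin[OF s1 s2] in auto)
  thus "(hderiv k (\<lambda>r. t1 * s1 r + t2 * s2 r) has_vector_derivative
          hderiv (Suc k) (\<lambda>r. t1 * s1 r + t2 * s2 r) x) (at x within {0..})"
    using hderiv_lin[OF s1 s2 x, of "Suc k"] by simp
qed

theorem mainTheorem2:
  fixes mu :: "'m::topological_space \<Rightarrow> 'g::real_normed_vector"
    and dphi vnorm nu_rest :: "'m \<Rightarrow> real"
    and s1 s2 :: "real \<Rightarrow> real" and t1 t2 :: real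
  assumes "\<And>x. dphi x \<ge> 0" and "\<And>x. vnorm x \<ge> 0" and "\<And>x. nu_rest x \<ge> 0"
    and "admissible mu dphi vnorm (\<lambda>x. nu_rest x + vnorm x + 1) s1"
    and "admissible mu dphi vnorm (\<lambda>x. nu_rest x + vnorm x + 1) s2"
    and "t1 > 0" and "t2 > 0"
  shows "admissible mu dphi vnorm (\<lambda>x. nu_rest x + vnorm x + 1) (\<lambda>r. t1 * s1 r + t2 * s2 r)"
proof -
  note a1 = assms(4)[unfolded admissible_def Let_def]
  note a2 = assms(5)[unfolded admissible_def Let_def]
  have sm1: "smooth_halfline s1" and sm2: "smooth_halfline s2" using a1 a2 by auto
  have p1: "\<And>x. x \<ge> 0 \<Longrightarrow> hderiv 1 s1 x > 0" and p2: "\<And>x. x \<ge> 0 \<Longrightarrow> hderiv 1 s2 x > 0"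
    using a1 a2 by auto
  note lin = hderiv_lin[OF sm1 sm2]
  define L where "L = (\<lambda>r. t1 * s1 r + t2 * s2 r)"
  define ph where "ph = (\<lambda>x. norm (mu x) ^ 2 / 2)"
  have ph0: "\<And>x. ph x \<ge> 0" unfolding ph_def by simp
  define m where "m = min (t1^2) (t2^2)"
  define c where "c = t1 + t2 + 1"
  have mp: "m > 0" unfolding m_def using assms(6,7) by simp
  have cp: "c > 0" unfolding c_def using assms(6,7) by simp
  let ?Q = "\<lambda>s x. (hderiv 1 s (ph x))^2 * (vnorm x)^2 /
      (\<bar>hderiv 2 s (ph x)\<bar> * dphi x * vnorm x + hderiv 1 s (ph x) * (nu_rest x + vnorm x + 1) + 1)"
  have F1: "filterlim (?Q s1) at_top cocompact" and F2: "filterlim (?Q s2) at_top cocompact"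
    using a1 a2 unfolding ph_def by auto
  have "filterlim (?Q L) at_top cocompact"
    unfolding filterlim_at_top
  proof
    fix Z :: real
    define K where "K = max 0 (Z * c / m)"
    have "eventually (\<lambda>x. K \<le> ?Q s1 x) cocompact" using F1 unfolding filterlim_at_top by blast
    moreover have "eventually (\<lambda>x. K \<le> ?Q s2 x) cocompact" using F2 unfolding filterlim_at_top by blast
    ultimately show "eventually (\<lambda>x. Z \<le> ?Q L x) cocompact"
    proof eventually_elim
      case (elim x)
      have K0: "K \<ge> 0" unfolding K_def by simp
      have nu1: "nu_rest x + vnorm x + 1 \<ge> 1" using assms(2,3)[of x] by simp
      have key: "m * K / c \<le> ?Q L x"
        using arith_key[OF assms(6,7) p1[OF ph0] p2[OF ph0] assms(1) assms(2) nu1 K0 elim(1) elim(2)]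
        unfolding m_def c_def L_def lin[OF ph0[of x], of 1 t1 t2]
          lin[OF ph0[of x], of 2 t1 t2] .
      have "Z \<le> m * K / c"
      proof -
        have "Z * c / m \<le> K" unfolding K_def by simp
        hence "Z * c \<le> K * m" using mp by (simp add: pos_divide_le_eq)
        thus ?thesis using cp by (simp add: pos_le_divide_eq mult.commute)
      qed
      thus ?case using key by linarith
    qed
  qed
  moreover have "smooth_halfline L" unfolding L_def by (rule smooth_lin[OF sm1 sm2 assms(6,7)])
  moreover have "\<forall>x\<ge>0. hderiv 1 L x > 0"
    using lin[where k=1] p1 p2 assms(6,7) unfolding L_def by (simp add: add_pos_pos)
  ultimately show ?thesis unfolding admissible_def Let_def L_def ph_def by simp
qed

end
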